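(* Let $\mathbb{L}$ be a Markov Logic Network of signature $\sigma$ and let $\Pi_{\mathbb{L}}$ be the $\mathrm{LP}^{\mathrm{MLN}}$ program obtained from (the ground instance of) $\mathbb{L}$ by turning each weighted formula $w:F$ into the weighted rule $w:\ \bot\leftarrow\neg F$ and adding the weighted rule $w:\ A\leftarrow\neg\neg A$ for every ground atom $A$ of $\sigma$, where $w$ is an arbitrary real number. Then for every Herbrand interpretation $I$ of $\sigma$, $P_{\mathbb{L}}(I)=P_{\Pi_{\mathbb{L}}}(I)$.
   Context: $\sigma$ is a first-order signature with no function constants of positive arity; Herbrand interpretations are identified with sets of ground atoms. A Markov Logic Network (MLN) $\mathbb{L}$ is a finite set of weighted formulas $w:F$, $F$ a first-order formula and $w$ a real number or the symbol $\alpha$ (hard weight), identified with its ground instance (each ground instance of $F$, a propositional combination of ground atoms, inherits $w$). For an interpretation $I$, $\mathbb{L}_I$ is the set of $w:F\in\mathbb{L}$ with $I\models F$, $W_{\mathbb{L}}(I)=\exp(\sum_{w:F\in\mathbb{L}_I}w)$, and $P_{\mathbb{L}}(I)=\lim_{\alpha\to\infty}W_{\mathbb{L}}(I)/\sum_J W_{\mathbb{L}}(J)$, the sum over all Herbrand interpretations $J$, with $\alpha$ treated as a real parameter. A formula is negative if every occurrence of every atom is in the scope of negation. A rule has the form $A\leftarrow B\wedge N$ ($A$ a possibly empty disjunction of atoms, $B$ a conjunction of atoms, $N$ a negative formula), identified with $B\wedge N\rightarrow A$. For a ground program $\Pi$, the reduct $\Pi^I$ consists of $A\leftarrow B$ for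 all rules $A\leftarrow B\wedge N$ with $I\models N$; $I$ is a stable model of $\Pi$ if it is a minimal model of $\Pi^I$. An $\mathrm{LP}^{\mathrm{MLN}}$ program is a finite set of weighted rules $w:R$ ($w$ real or $\alpha$); $\Pi_I=\{w:R\in\Pi\mid I\models R\}$, $\overline{\Pi_I}$ its unweighted rules; $\mathrm{SM}[\Pi]=\{I\mid I\text{ is a stable model of }\overline{\Pi_I}\}$; $W_\Pi(I)=\exp(\sum_{w:R\in\Pi_I}w)$ if $I\in\mathrm{SM}[\Pi]$, else $0$; $P_\Pi(I)=\lim_{\alpha\to\infty}W_\Pi(I)/\sum_{J\in\mathrm{SM}[\Pi]}W_\Pi(J)$. *)

theory Defs
  imports Complex_Main
begin

text \<open>Since sigma has no function constants of positive arity, the Herbrand base is the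
  set of ground atoms; we take it to be a finite type 'a.\<close>

datatype 'a form =
    Atom 'a
  | Bot
  | Top
  | Neg "'a form"
  | Conj "'a form" "'a form"
  | Disj "'a form" "'a form"
  | Imp "'a form" "'a form"

fun sat :: "'a set \<Rightarrow> 'a form \<Rightarrow> bool" where
  "sat I (Atom a) = (a \<in> I)"
| "sat I Bot = False"
| "sat I Top = True"
| "sat I (Neg F) = (\<not> sat I F)"
| "sat I (Conj F G) = (sat I F \<and> sat I G)"
| "sat I (Disj F G) = (sat I F \<or> sat I G)"
| "sat I (Imp F G) = (sat I F \<longrightarrow> sat I G)"

fun negative :: "'a form \<Rightarrow> bool" where
  "negative (Atom a) = False"
| "negative Bot = True"
| "negative Top = True"
| "negative (Neg F) = True"
| "negative (Conj F G) = (negative F \<and> negative G)"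
| "negative (Disj F G) = (negative F \<and> negative G)"
| "negative (Imp F G) = (negative F \<and> negative G)"

datatype weight = Soft real | Hard

fun wval :: "real \<Rightarrow> weight \<Rightarrow> real" where
  "wval \<alpha> (Soft r) = r"
| "wval \<alpha> Hard = \<alpha>"

text \<open>A (ground) Markov Logic Network: a finite list of weighted ground formulas
  (list, so that repeated ground instances are counted with multiplicity).\<close>
type_synonym 'a mln = "(weight \<times> 'a form) list"

definition mln_W :: "real \<Rightarrow> 'a mln \<Rightarrow> 'a set \<Rightarrow> real" where
  "mln_W \<alpha> L I = exp (sum_list [wval \<alpha> w. (w, F) \<leftarrow> L, sat I F])"

definition mln_P :: "'a::finite mln \<Rightarrow> 'a set \<Rightarrow> real" where
  "mln_P L I = Lim at_top (\<lambda>\<alpha>. mln_W \<alpha> L I / (\<Sum>J\<in>(UNIV :: 'a set set). mln_W \<alpha> L J))"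

text \<open>Rules  A <- B /\ N : head = list of atoms (disjunction), positive body = list of
  atoms (conjunction), negative part N (a formula, negative in a well-formed rule).\<close>
datatype 'a rule = Rule (head: "'a list") (pbody: "'a list") (nbody: "'a form")

definition sat_rule :: "'a set \<Rightarrow> 'a rule \<Rightarrow> bool" where
  "sat_rule I r = ((set (pbody r) \<subseteq> I \<and> sat I (nbody r)) \<longrightarrow> (\<exists>a\<in>set (head r). a \<in> I))"

definition reduct :: "'a rule set \<Rightarrow> 'a set \<Rightarrow> ('a list \<times> 'a list) set" where
  "reduct R I = {(head r, pbody r) | r. r \<in> R \<and> sat I (nbody r)}"

definition sat_pos :: "'a set \<Rightarrow> ('a list \<times> 'a list) \<Rightarrow> bool" where
  "sat_pos J hb = (set (snd hb) \<subseteq> J \<longrightarrow> (\<exists>a\<in>set (fst hb). a \<in> J))"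

definition stable_model :: "'a rule set \<Rightarrow> 'a set \<Rightarrow> bool" where
  "stable_model R I =
     ((\<forall>p\<in>reduct R I. sat_pos I p) \<and>
      \<not> (\<exists>J. J \<subset> I \<and> (\<forall>p\<in>reduct R I. sat_pos J p)))"

type_synonym 'a lpmln = "(weight \<times> 'a rule) list"

definition sat_rules :: "'a lpmln \<Rightarrow> 'a set \<Rightarrow> 'a rule set" where
  "sat_rules \<Pi> I = {r. \<exists>w. (w, r) \<in> set \<Pi> \<and> sat_rule I r}"

definition SM :: "'a lpmln \<Rightarrow> 'a set set" where
  "SM \<Pi> = {I. stable_model (sat_rules \<Pi> I) I}"

definition lp_W :: "real \<Rightarrow> 'a lpmln \<Rightarrow> 'a set \<Rightarrow> real" where
  "lp_W \<alpha> \<Pi> I = (if I \<in> SM \<Pi> then exp (sum_list [wval \<alpha> w. (w, r) \<leftarrow> \<Pi>, sat_rule I r]) else 0)"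

definition lp_P :: "'a lpmln \<Rightarrow> 'a set \<Rightarrow> real" where
  "lp_P \<Pi> I = Lim at_top (\<lambda>\<alpha>. lp_W \<alpha> \<Pi> I / (\<Sum>J\<in>SM \<Pi>. lp_W \<alpha> \<Pi> J))"

definition mln_to_lp :: "real \<Rightarrow> 'a::finite mln \<Rightarrow> 'a lpmln" where
  "mln_to_lp w' L =
     [(w, Rule [] [] (Neg F)). (w, F) \<leftarrow> L] @
     [(Soft w', Rule [A] [] (Neg (Neg (Atom A)))). A \<leftarrow> (SOME xs. distinct xs \<and> set xs = (UNIV :: 'a set))]"

end

theory Submission
  imports Defs
begin

lemma part1: "sum_list [wval a w. (w, r) \<leftarrow> [(w, Rule [] [] (Neg F)). (w, F) \<leftarrow> L], sat_rule I r]
   = sum_list [wval a w. (w, F) \<leftarrow> L, sat I F]"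
  by (induction L) (auto simp: sat_rule_def)

lemma part2: "sum_list [wval a w. (w, r) \<leftarrow> [(Soft w', Rule [A] [] (Neg (Neg (Atom A)))). A \<leftarrow> xs], sat_rule I r]
   = w' * real (length xs)"
  by (induction xs) (auto simp: sat_rule_def algebra_simps)

lemma weight: fixes L :: "'a::finite mln" shows "sum_list [wval a w. (w, r) \<leftarrow> mln_to_lp w' L, sat_rule I r]
   = sum_list [wval a w. (w, F) \<leftarrow> L, sat I F] + w' * real (length (SOME xs. distinct xs \<and> set xs = (UNIV :: 'a::finite set)))"
proof -
  let ?xs = "(SOME xs. distinct xs \<and> set xs = (UNIV :: 'a::finite set))"
  have e: "[wval a w. (w, r) \<leftarrow> mln_to_lp w' L, sat_rule I r] =
     [wval a w. (w, r) \<leftarrow> [(w, Rule [] [] (Neg F)). (w, F) \<leftarrow> L], sat_rule I r] @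
     [wval a w. (w, r) \<leftarrow> [(Soft w', Rule [A] [] (Neg (Neg (Atom A)))). A \<leftarrow> ?xs], sat_rule I r]"
    unfolding mln_to_lp_def by simp
  show ?thesis unfolding e sum_list_append part1 part2 ..
qed

lemma allSM: "SM (mln_to_lp w' L) = (UNIV :: 'a::finite set set)"
proof -
  have "stable_model (sat_rules (mln_to_lp w' L) I) I" for I :: "'a set"
  proof -
    define xs where "xs = (SOME xs. distinct xs \<and> set xs = (UNIV :: 'a set))"
    have xs: "set xs = UNIV" unfolding xs_def
      by (metis (mono_tags, lifting) finite_distinct_list finite_UNIV someI_ex)
    have red: "reduct (sat_rules (mln_to_lp w' L) I) I = {([A], [] :: 'a list) | A. A \<in> I}"
    proof (rule set_eqI, rule iffI)
      fix p assume "p \<in> reduct (sat_rules (mln_to_lp w' L) I) I"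
      then show "p \<in> {([A], [] :: 'a list) | A. A \<in> I}"
        unfolding reduct_def sat_rules_def mln_to_lp_def
        by (auto simp: sat_rule_def)
    next
      fix p assume "p \<in> {([A], [] :: 'a list) | A. A \<in> I}"
      then obtain A where p: "p = ([A], [])" "A \<in> I" by auto
      have "A \<in> set xs" using xs by auto
      then have "(Soft w', Rule [A] [] (Neg (Neg (Atom A)))) \<in> set (mln_to_lp w' L)"
        unfolding mln_to_lp_def xs_def by auto
      then show "p \<in> reduct (sat_rules (mln_to_lp w' L) I) I"
        unfolding reduct_def sat_rules_def using p
        by (auto simp: sat_rule_def intro!: exI[of _ "Rule [A] [] (Neg (Neg (Atom A)))"])
    qed
    have Jeq: "J = I" if "J \<subseteq> I" "\<forall>p\<in>{([A], [] :: 'a list) | A. A \<in> I}. sat_pos J p" for J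
    proof -
      have "x \<in> J" if "x \<in> I" for x
        using that \<open>\<forall>p\<in>_. _\<close> unfolding sat_pos_def by fastforce
      then show ?thesis using \<open>J \<subseteq> I\<close> by auto
    qed
    have sI: "\<forall>p\<in>{([A], [] :: 'a list) | A. A \<in> I}. sat_pos I p" by (auto simp: sat_pos_def)
    show ?thesis unfolding stable_model_def red using sI Jeq by blast
  qed
  then show ?thesis unfolding SM_def by auto
qed

theorem theorem2:
  fixes L :: "'a::finite mln" and w :: real and I :: "'a set"
  shows "mln_P L I = lp_P (mln_to_lp w L) I"
proof -
  define c where "c = exp (w * real (length (SOME xs. distinct xs \<and> set xs = (UNIV :: 'a set))))"
  have c: "c \<noteq> 0" unfolding c_def by simp
  have W: "lp_W a (mln_to_lp w L) J = c * mln_W a L J" for a J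
    unfolding lp_W_def mln_W_def allSM weight c_def by (simp add: exp_add)
  have "(\<lambda>a. mln_W a L I / (\<Sum>J\<in>(UNIV :: 'a set set). mln_W a L J)) =
        (\<lambda>a. lp_W a (mln_to_lp w L) I / (\<Sum>J\<in>SM (mln_to_lp w L). lp_W a (mln_to_lp w L) J))"
    unfolding W allSM by (simp add: sum_distrib_left[symmetric] c)
  then show ?thesis unfolding mln_P_def lp_P_def by simp
qed

end
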